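(* Let $\mathcal{A}$ be a complex subspace arrangement in $\mathbb{C}^l$ and $x_0\in\mathcal{A}$. Let $\mathcal{A}'=\mathcal{A}\setminus\{x_0\}$, $\widetilde{\mathcal{A}''}=\{x_0\cap y\mid y\in\mathcal{A}'\}$ (a finite set of linear subspaces of $x_0$), and let $\mathcal{A}''\subseteq\widetilde{\mathcal{A}''}$ be the set of those elements of $\widetilde{\mathcal{A}''}$ that are not properly contained in another element of $\widetilde{\mathcal{A}''}$. Fix any linear order on $\widetilde{\mathcal{A}''}$ and give $\mathcal{A}''$ the induced order. Then the natural inclusion $D(\mathcal{A}'')\hookrightarrow D(\widetilde{\mathcal{A}''})$ (both complexes formed with ambient space $W=x_0$) is a quasi-isomorphism.
   Context: A (complex) subspace arrangement in $\mathbb{C}^l$ is a finite set $\mathcal{A}$ of complex linear subspaces of $\mathbb{C}^l$ such that there are no distinct $x,y\in\mathcal{A}$ with $x\subset y$. For a finite set $\mathcal{C}$ of linear subspaces of a complex vector space $W$, equipped with a linear order, $D(\mathcal{C})$ denotes the cochain complex over $\mathbb{Q}$ with basis all subsets $\sigma\subseteq\mathcal{C}$, where, writing $\vee\sigma=\bigcap_{x\in\sigma}x$ (with $\vee\emptyset=W$), $\deg\sigma=2\operatorname{codim}_W(\vee\sigma)-|\sigma|$, and for $\sigma=\{x_{i_1},\dots,x_{i_r}\}$ listed in increasing order, $d\sigma=\sum_{j:\vee(\sigma\setminus\{x_{i_j}\})=\vee\sigma}(-1)^j(\sigma\setminus\{x_{i_j}\})$. For $\mathcal{C}'\subseteq\mathcal{C}$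 with induced order, $D(\mathcal{C}')$ is the subcomplex of $D(\mathcal{C})$ spanned by subsets of $\mathcal{C}'$. *)

theory Defs
  imports "HOL-Analysis.Analysis"
begin

text \<open>Vectors of C^l are modelled as the type complex ^ 'n (l = CARD('n)).
  Complex linear subspaces are sets S with vec.subspace S, dimension vec.dim
  (complex-linear notions, scalar multiplication (*s)).\<close>


definition subspace_arrangement :: "(complex ^ ('n::finite)) set set \<Rightarrow> bool" where
  "subspace_arrangement A \<longleftrightarrow> finite A \<and> (\<forall>x\<in>A. vec.subspace x)
     \<and> (\<forall>x\<in>A. \<forall>y\<in>A. x \<noteq> y \<longrightarrow> \<not> x \<subseteq> y)"

text \<open>Join of sigma: intersection of the members, intersected with the ambient space W
  (so the empty join is W).\<close>
definition join :: "(complex ^ ('n::finite)) set \<Rightarrow> (complex ^ ('n::finite)) set set \<Rightarrow> (complex ^ ('n::finite)) set" where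
  "join W \<sigma> = W \<inter> \<Inter>\<sigma>"

definition cdeg :: "(complex ^ ('n::finite)) set \<Rightarrow> (complex ^ ('n::finite)) set set \<Rightarrow> int" where
  "cdeg W \<sigma> = 2 * (int (vec.dim W) - int (vec.dim (join W \<sigma>))) - int (card \<sigma>)"

text \<open>Sign (-1)^j where j is the (1-based) position of x in sigma w.r.t. the order r.\<close>
definition csign :: "((complex ^ ('n::finite)) set \<times> (complex ^ ('n::finite)) set) set \<Rightarrow> (complex ^ ('n::finite)) set set \<Rightarrow> (complex ^ ('n::finite)) set \<Rightarrow> rat" where
  "csign r \<sigma> x = (-1) ^ Suc (card {y \<in> \<sigma>. (y, x) \<in> r \<and> y \<noteq> x})"

text \<open>Cochains of D(C) are rational coefficient functions on subsets of C;
  a homogeneous cochain of degree k is supported on subsets of C of degree k.\<close>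
definition cochain :: "(complex ^ ('n::finite)) set \<Rightarrow> (complex ^ ('n::finite)) set set \<Rightarrow> int \<Rightarrow> ((complex ^ ('n::finite)) set set \<Rightarrow> rat) \<Rightarrow> bool" where
  "cochain W C k c \<longleftrightarrow> (\<forall>\<sigma>. c \<sigma> \<noteq> 0 \<longrightarrow> \<sigma> \<subseteq> C \<and> cdeg W \<sigma> = k)"

text \<open>This is the linear extension of the basis formula
  d sigma = sum_j (-1)^j (sigma - x_{i_j}).  On cochains supported on subsets of
  C' \<subseteq> C it agrees with the differential of the subcomplex D(C').\<close>
definition cdiff :: "(complex ^ ('n::finite)) set \<Rightarrow> (complex ^ ('n::finite)) set set \<Rightarrow> ((complex ^ ('n::finite)) set \<times> (complex ^ ('n::finite)) set) set
    \<Rightarrow> ((complex ^ ('n::finite)) set set \<Rightarrow> rat) \<Rightarrow> ((complex ^ ('n::finite)) set set \<Rightarrow> rat)" where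
  "cdiff W C r c = (\<lambda>\<tau>. \<Sum>x \<in> C - \<tau>.
      if join W \<tau> = join W (insert x \<tau>) then csign r (insert x \<tau>) x * c (insert x \<tau>) else 0)"

text \<open>The inclusion D(C') into D(C) (C' \<subseteq> C, induced order) is a quasi-isomorphism:
  for every degree k the induced map on cohomology H^k is injective and surjective,
  written out on representatives.\<close>
definition incl_quasi_iso :: "(complex ^ ('n::finite)) set \<Rightarrow> (complex ^ ('n::finite)) set set \<Rightarrow> (complex ^ ('n::finite)) set set
    \<Rightarrow> ((complex ^ ('n::finite)) set \<times> (complex ^ ('n::finite)) set) set \<Rightarrow> bool" where
  "incl_quasi_iso W C' C r \<longleftrightarrow>
     (\<forall>k c. cochain W C' k c \<and> cdiff W C r c = (\<lambda>_. 0)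
            \<and> (\<exists>b. cochain W C (k - 1) b \<and> cdiff W C r b = c)
          \<longrightarrow> (\<exists>b. cochain W C' (k - 1) b \<and> cdiff W C r b = c))
   \<and> (\<forall>k c. cochain W C k c \<and> cdiff W C r c = (\<lambda>_. 0)
          \<longrightarrow> (\<exists>c' b. cochain W C' k c' \<and> cdiff W C r c' = (\<lambda>_. 0)
                  \<and> cochain W C (k - 1) b \<and> c = (\<lambda>\<sigma>. c' \<sigma> + cdiff W C r b \<sigma>)))"

end

theory Submission
  imports Defs
begin

definition tot :: "'a set \<Rightarrow> ('a \<times> 'a) set \<Rightarrow> bool" where
  "tot C r \<longleftrightarrow> (\<forall>a\<in>C. \<forall>b\<in>C. a \<noteq> b \<longrightarrow> ((a,b) \<in> r \<longleftrightarrow> (b,a) \<notin> r))"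

definition ee :: "('a \<times> 'a) set \<Rightarrow> 'a \<Rightarrow> 'a \<Rightarrow> rat" where
  "ee r a b = (if (a,b) \<in> r then -1 else 1)"

lemma csign_insert_self: "csign r (insert a S) a = csign r S a"
proof -
  have "{y \<in> insert a S. (y, a) \<in> r \<and> y \<noteq> a} = {y \<in> S. (y, a) \<in> r \<and> y \<noteq> a}" by auto
  then show ?thesis by (simp add: csign_def)
qed

lemma csign_insert:
  assumes "finite S" "a \<notin> S" "a \<noteq> b"
  shows "csign r (insert a S) b = ee r a b * csign r S b"
proof (cases "(a,b) \<in> r")
  case True
  have "{y \<in> insert a S. (y, b) \<in> r \<and> y \<noteq> b} = insert a {y \<in> S. (y, b) \<in> r \<and> y \<noteq> b}"
    using True assms by auto
  moreover have "card (insert a {y \<in> S. (y, b) \<in> r \<and> y \<noteq> b}) = Suc (card {y \<in> S. (y, b) \<in> r \<and> y \<noteq> b})"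
    using assms by simp
  ultimately show ?thesis using True by (simp add: csign_def ee_def)
next
  case False
  have "{y \<in> insert a S. (y, b) \<in> r \<and> y \<noteq> b} = {y \<in> S. (y, b) \<in> r \<and> y \<noteq> b}"
    using False assms by auto
  then show ?thesis using False by (simp add: csign_def ee_def)
qed

lemma m1sq: "((-1::rat)^k) * (-1)^k = 1"
  by (induct k) auto

lemma csign_sq: "csign r S a * csign r S a = 1"
  unfolding csign_def by (rule m1sq)

lemma ee_swap:
  assumes "tot C r" "a \<in> C" "b \<in> C" "a \<noteq> b"
  shows "ee r a b + ee r b a = 0" "ee r a b * ee r b a = -1"
proof -
  have "(a,b) \<in> r \<longleftrightarrow> (b,a) \<notin> r" using assms unfolding tot_def by blast
  then show "ee r a b + ee r b a = 0" "ee r a b * ee r b a = -1" unfolding ee_def by auto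
qed

lemma join_insert_mono: "join W (insert a S) \<subseteq> join W S"
  by (auto simp: join_def)

lemma join_absorb: "x \<in> S \<Longrightarrow> x \<subseteq> y \<Longrightarrow> join W (insert y S) = join W S"
  by (auto simp: join_def)

lemma cdeg_insert:
  "finite S \<Longrightarrow> a \<notin> S \<Longrightarrow> join W (insert a S) = join W S \<Longrightarrow> cdeg W (insert a S) = cdeg W S - 1"
  by (simp add: cdeg_def)

lemma cdiff_diff: "cdiff W C r (\<lambda>\<sigma>. f \<sigma> - g \<sigma>) = (\<lambda>\<tau>. cdiff W C r f \<tau> - cdiff W C r g \<tau>)"
  unfolding cdiff_def by (rule ext) (simp add: sum_subtractf[symmetric] right_diff_distrib if_distrib cong: if_cong)

lemma cdiff_add: "cdiff W C r (\<lambda>\<sigma>. f \<sigma> + g \<sigma>) = (\<lambda>\<tau>. cdiff W C r f \<tau> + cdiff W C r g \<tau>)"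
  unfolding cdiff_def by (rule ext) (simp add: sum.distrib[symmetric], intro sum.cong, auto simp: distrib_left)

lemma cdiff_zero: "cdiff W C r (\<lambda>_. 0) = (\<lambda>_. 0)"
  unfolding cdiff_def by (rule ext) (auto intro!: sum.neutral)

lemma antisym_sum_zero:
  assumes "finite A" "\<And>a b. a \<in> A \<Longrightarrow> b \<in> A \<Longrightarrow> a \<noteq> b \<Longrightarrow> g b a = - g a b"
  shows "(\<Sum>a\<in>A. \<Sum>b\<in>A-{a}. g a b) = (0::rat)"
proof -
  define G where "G a b = (if a = b then 0 else g a b)" for a b
  have 1: "(\<Sum>b\<in>A-{a}. g a b) = (\<Sum>b\<in>A. G a b)" if "a \<in> A" for a
  proof -
    have "(\<Sum>b\<in>A. G a b) = G a a + (\<Sum>b\<in>A-{a}. G a b)"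
      using that assms(1) by (simp add: sum.remove)
    also have "\<dots> = (\<Sum>b\<in>A-{a}. g a b)"
    proof -
      have "G a a = 0" by (simp add: G_def)
      moreover have "sum (G a) (A-{a}) = sum (g a) (A-{a})" by (rule sum.cong) (auto simp: G_def)
      ultimately show ?thesis by simp
    qed
    finally show ?thesis by simp
  qed
  have S: "(\<Sum>a\<in>A. \<Sum>b\<in>A-{a}. g a b) = (\<Sum>a\<in>A. \<Sum>b\<in>A. G a b)"
    using 1 by simp
  also have "\<dots> = (\<Sum>b\<in>A. \<Sum>a\<in>A. G a b)" by (rule sum.swap)
  also have "\<dots> = (\<Sum>b\<in>A. \<Sum>a\<in>A. - G b a)"
  proof (intro sum.cong refl)
    fix a b assume ab: "a \<in> A" "b \<in> A"
    show "G b a = - G a b" using assms(2)[OF ab] by (cases "a = b") (auto simp: G_def)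
  qed
  also have "\<dots> = - (\<Sum>b\<in>A. \<Sum>a\<in>A. G b a)" by (simp add: sum_negf)
  finally have "(\<Sum>a\<in>A. \<Sum>b\<in>A. G a b) = - (\<Sum>a\<in>A. \<Sum>b\<in>A. G a b)" using S by simp
  then have "(\<Sum>a\<in>A. \<Sum>b\<in>A. G a b) = 0" by simp
  then show ?thesis using S by simp
qed

lemma sum_nonzero_ex: "sum f A \<noteq> 0 \<Longrightarrow> \<exists>a\<in>A. f a \<noteq> 0"
  by (meson sum.neutral)

lemma cdiff_out:
  assumes "\<And>\<sigma>. c \<sigma> \<noteq> 0 \<Longrightarrow> \<sigma> \<subseteq> C" "\<not> \<tau> \<subseteq> C"
  shows "cdiff W C r c \<tau> = 0"
  unfolding cdiff_def using assms by (intro sum.neutral) auto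

lemma cdiff_supp:
  assumes "\<And>\<sigma>. c \<sigma> \<noteq> 0 \<Longrightarrow> \<sigma> \<subseteq> C" "cdiff W C r c \<tau> \<noteq> 0"
  shows "\<tau> \<subseteq> C"
  using cdiff_out[OF assms(1)] assms(2) by blast

lemma cdiff_cdiff:
  assumes fin: "finite C" and tot: "tot C r" and supp: "\<And>\<sigma>. c \<sigma> \<noteq> 0 \<Longrightarrow> \<sigma> \<subseteq> C"
  shows "cdiff W C r (cdiff W C r c) = (\<lambda>_. 0)"
proof (rule ext)
  fix \<tau>
  define A where "A = C - \<tau>"
  define g where "g a b = (if join W \<tau> = join W (insert b (insert a \<tau>))
     then csign r (insert a \<tau>) a * csign r (insert b (insert a \<tau>)) b * c (insert b (insert a \<tau>)) else 0)" for a b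
  have inner: "cdiff W C r (cdiff W C r c) \<tau> = (\<Sum>a\<in>A. \<Sum>b\<in>A-{a}. g a b)"
    unfolding cdiff_def A_def
  proof (rule sum.cong[OF refl])
    fix a assume a: "a \<in> C - \<tau>"
    have e: "C - insert a \<tau> = C - \<tau> - {a}" by auto
    have m1: "join W (insert a \<tau>) \<subseteq> join W \<tau>" by (rule join_insert_mono)
    have m2: "join W (insert b (insert a \<tau>)) \<subseteq> join W (insert a \<tau>)" for b by (rule join_insert_mono)
    show "(if join W \<tau> = join W (insert a \<tau>)
         then csign r (insert a \<tau>) a *
              (\<Sum>x\<in>C - insert a \<tau>.
                  if join W (insert a \<tau>) = join W (insert x (insert a \<tau>))
                  then csign r (insert x (insert a \<tau>)) x * c (insert x (insert a \<tau>)) else 0)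
         else 0) = (\<Sum>b\<in>C - \<tau> - {a}. g a b)"
    proof (cases "join W \<tau> = join W (insert a \<tau>)")
      case True
      show ?thesis unfolding e sum_distrib_left if_P[OF True]
        by (intro sum.cong refl) (auto simp: g_def True)
    next
      case False
      have "g a b = 0" for b
      proof -
        have "join W \<tau> \<noteq> join W (insert b (insert a \<tau>))" using False m1 m2[of b] by blast
        then show ?thesis by (simp add: g_def)
      qed
      then show ?thesis using False by simp
    qed
  qed
  have anti: "g b a = - g a b" if ab: "a \<in> A" "b \<in> A" "a \<noteq> b" for a b
  proof (cases "finite \<tau>")
    case True
    have abt: "a \<notin> \<tau>" "b \<notin> \<tau>" "a \<in> C" "b \<in> C" using ab A_def by auto
    have ee: "ee r b a = - ee r a b" using ee_swap(1)[OF tot abt(3,4) ab(3)] by simp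
    have s1: "csign r (insert a (insert b \<tau>)) a = ee r b a * csign r \<tau> a"
      using csign_insert_self[of r a "insert b \<tau>"] csign_insert[OF True abt(2), of a r] ab(3) by simp
    have s2: "csign r (insert b (insert a \<tau>)) b = ee r a b * csign r \<tau> b"
      using csign_insert_self[of r b "insert a \<tau>"] csign_insert[OF True abt(1), of b r] ab(3) by simp
    have s3: "csign r (insert a \<tau>) a = csign r \<tau> a" "csign r (insert b \<tau>) b = csign r \<tau> b"
      by (rule csign_insert_self)+
    have ic: "insert a (insert b \<tau>) = insert b (insert a \<tau>)" by auto
    show ?thesis unfolding g_def s1 s2 s3 ee unfolding ic by (simp only: if_distrib) (simp add: algebra_simps)
  next
    case False
    have "\<not> insert b (insert a \<tau>) \<subseteq> C" "\<not> insert a (insert b \<tau>) \<subseteq> C"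
      using False fin by (meson finite_insert finite_subset)+
    then have "c (insert b (insert a \<tau>)) = 0" "c (insert a (insert b \<tau>)) = 0" using supp by blast+
    then show ?thesis by (simp add: g_def)
  qed
  have "finite A" using fin A_def by simp
  from antisym_sum_zero[OF this anti] inner show "cdiff W C r (cdiff W C r c) \<tau> = 0" by simp
qed

definition hh where
  "hh x y r c = (\<lambda>\<tau>. if x \<in> \<tau> \<and> y \<in> \<tau> then csign r \<tau> y * c (\<tau> - {y}) else 0)"

lemma hh_supp:
  assumes "y \<in> C" "\<And>\<sigma>. c \<sigma> \<noteq> 0 \<Longrightarrow> \<sigma> \<subseteq> C" "hh x y r c \<tau> \<noteq> 0"
  shows "\<tau> \<subseteq> C"
proof -
  have "y \<in> \<tau>" "c (\<tau> - {y}) \<noteq> 0" using assms(3) by (auto simp: hh_def split: if_splits)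
  then show ?thesis using assms(1,2) by blast
qed

lemma key:
  assumes fin: "finite Cb" and tot: "tot Cb r" and xy: "x \<in> Cb" "y \<in> Cb" "x \<noteq> y" "x \<subseteq> y"
    and supp: "\<And>\<sigma>. c \<sigma> \<noteq> 0 \<Longrightarrow> \<sigma> \<subseteq> Cb" and xt: "x \<in> \<tau>"
  shows "cdiff W Cb r (hh x y r c) \<tau> + hh x y r (cdiff W Cb r c) \<tau> = c \<tau>"
proof (cases "\<tau> \<subseteq> Cb")
  case False
  have 1: "c \<tau> = 0" using supp False by blast
  have 2: "cdiff W Cb r (hh x y r c) \<tau> = 0"
    by (rule cdiff_out[OF _ False]) (rule hh_supp[OF xy(2) supp])
  have 3: "cdiff W Cb r c (\<tau> - {y}) = 0"
    by (rule cdiff_out[OF supp]) (use False xy(2) in auto)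
  show ?thesis using 1 2 3 by (simp add: hh_def)
next
  case True
  hence ft: "finite \<tau>" using fin finite_subset by blast
  show ?thesis
  proof (cases "y \<in> \<tau>")
    case False
    have h0: "hh x y r (cdiff W Cb r c) \<tau> = 0" using False by (simp add: hh_def)
    have yA: "y \<in> Cb - \<tau>" using False xy by simp
    have J: "join W \<tau> = join W (insert y \<tau>)" using join_absorb[OF xt xy(4)] by simp
    have "cdiff W Cb r (hh x y r c) \<tau> =
       (if join W \<tau> = join W (insert y \<tau>) then csign r (insert y \<tau>) y * hh x y r c (insert y \<tau>) else 0)
       + (\<Sum>z\<in>Cb - \<tau> - {y}. if join W \<tau> = join W (insert z \<tau>) then csign r (insert z \<tau>) z * hh x y r c (insert z \<tau>) else 0)"
      unfolding cdiff_def using fin yA by (simp add: sum.remove)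
    also have "(\<Sum>z\<in>Cb - \<tau> - {y}. if join W \<tau> = join W (insert z \<tau>) then csign r (insert z \<tau>) z * hh x y r c (insert z \<tau>) else 0) = 0"
      using False by (intro sum.neutral) (auto simp: hh_def)
    also have "insert y \<tau> - {y} = \<tau>" using False by auto
    then have "hh x y r c (insert y \<tau>) = csign r (insert y \<tau>) y * c \<tau>" using xt by (simp add: hh_def)
    finally have "cdiff W Cb r (hh x y r c) \<tau> = c \<tau>"
      using J csign_sq[of r "insert y \<tau>" y] by (simp add: mult.assoc[symmetric])
    then show ?thesis using h0 by simp
  next
    case True
    define \<sigma> where "\<sigma> = \<tau> - {y}"
    have ts: "\<tau> = insert y \<sigma>" "y \<notin> \<sigma>" "x \<in> \<sigma>" "finite \<sigma>" using True xt xy(3) ft by (auto simp: \<sigma>_def)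
    define A where "A = Cb - \<tau>"
    have fA: "finite A" "y \<notin> A" using fin by (auto simp: A_def ts)
    have CbS: "Cb - \<sigma> = insert y A" using xy(2) by (auto simp: A_def ts)
    define T1 where "T1 z = (if join W \<tau> = join W (insert z \<tau>) then csign r (insert z \<tau>) z * (csign r (insert z \<tau>) y * c (insert z \<sigma>)) else 0)" for z
    define T2 where "T2 z = (if join W \<sigma> = join W (insert z \<sigma>) then csign r (insert z \<sigma>) z * c (insert z \<sigma>) else 0)" for z
    have d1: "cdiff W Cb r (hh x y r c) \<tau> = (\<Sum>z\<in>A. T1 z)"
      unfolding cdiff_def A_def
    proof (rule sum.cong[OF refl])
      fix z assume z: "z \<in> Cb - \<tau>"
      have "insert z \<tau> - {y} = insert z \<sigma>" using z True by (auto simp: \<sigma>_def)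
      then show "(if join W \<tau> = join W (insert z \<tau>) then csign r (insert z \<tau>) z * hh x y r c (insert z \<tau>) else 0) = T1 z"
        using xt True by (simp add: hh_def T1_def)
    qed
    have Js: "join W (insert y \<sigma>) = join W \<sigma>" using join_absorb[OF ts(3) xy(4)] .
    have d2: "hh x y r (cdiff W Cb r c) \<tau> = csign r \<tau> y * (csign r \<tau> y * c \<tau> + (\<Sum>z\<in>A. T2 z))"
    proof -
      have "cdiff W Cb r c \<sigma> = T2 y + (\<Sum>z\<in>A. T2 z)"
        unfolding cdiff_def CbS T2_def using fA by simp
      also have "T2 y = csign r \<tau> y * c \<tau>" using Js by (simp add: T2_def ts(1))
      finally show ?thesis using xt True by (simp add: hh_def \<sigma>_def)
    qed
    have pt: "T1 z + csign r \<tau> y * T2 z = 0" if z: "z \<in> A" for z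
    proof -
      have zz: "z \<notin> \<sigma>" "z \<noteq> y" "z \<in> Cb" using z by (auto simp: A_def ts)
      have J1: "join W \<tau> = join W \<sigma>" using Js ts(1) by simp
      have J2: "join W (insert z \<tau>) = join W (insert z \<sigma>)"
        using join_absorb[of x "insert z \<sigma>" y W] ts(3) xy(4) by (simp add: ts(1) insert_commute)
      have s1: "csign r (insert z \<tau>) z = ee r y z * csign r \<sigma> z"
        using csign_insert_self[of r z \<tau>] csign_insert[OF ts(4) ts(2), of z r] zz(2) ts(1) by simp
      have s2: "csign r (insert z \<tau>) y = ee r z y * csign r \<sigma> y"
        using csign_insert[of "insert y \<sigma>" z y r] csign_insert_self[of r y \<sigma>] ts(1,2,4) zz
        by simp
      have s3: "csign r \<tau> y = csign r \<sigma> y" using csign_insert_self[of r y \<sigma>] ts(1) by simp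
      have s4: "csign r (insert z \<sigma>) z = csign r \<sigma> z" by (rule csign_insert_self)
      have e: "ee r y z * ee r z y = -1" using ee_swap(2)[OF tot xy(2) zz(3) zz(2)[symmetric]] .
      have "T1 z + csign r \<tau> y * T2 z = (if join W \<sigma> = join W (insert z \<sigma>) then
          (ee r y z * ee r z y + 1) * (csign r \<sigma> z * csign r \<sigma> y * c (insert z \<sigma>)) else 0)"
        unfolding T1_def T2_def J1 J2 s1 s2 s3 s4 by (simp add: algebra_simps)
      also have "\<dots> = 0" using e by simp
      finally show ?thesis .
    qed
    have "cdiff W Cb r (hh x y r c) \<tau> + hh x y r (cdiff W Cb r c) \<tau>
        = (csign r \<tau> y * csign r \<tau> y) * c \<tau> + (\<Sum>z\<in>A. T1 z + csign r \<tau> y * T2 z)"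
      unfolding d1 d2 by (simp add: sum.distrib sum_distrib_left sum_distrib_right algebra_simps)
    also have "\<dots> = c \<tau>" using pt csign_sq[of r \<tau> y] by simp
    finally show ?thesis .
  qed
qed


lemma cochain_supp: "cochain W C k c \<Longrightarrow> C \<subseteq> Cb \<Longrightarrow> c \<sigma> \<noteq> 0 \<Longrightarrow> \<sigma> \<subseteq> Cb"
  unfolding cochain_def by blast

lemma cochain_mono: "C \<subseteq> C2 \<Longrightarrow> cochain W C k c \<Longrightarrow> cochain W C2 k c"
  unfolding cochain_def by blast

lemma cochain_add: "cochain W C k a \<Longrightarrow> cochain W C k b \<Longrightarrow> cochain W C k (\<lambda>\<sigma>. a \<sigma> + b \<sigma>)"
  unfolding cochain_def
proof (intro allI impI)
  fix \<sigma> assume h: "a \<sigma> + b \<sigma> \<noteq> 0" and "\<forall>\<sigma>. a \<sigma> \<noteq> 0 \<longrightarrow> \<sigma> \<subseteq> C \<and> cdeg W \<sigma> = k"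
    "\<forall>\<sigma>. b \<sigma> \<noteq> 0 \<longrightarrow> \<sigma> \<subseteq> C \<and> cdeg W \<sigma> = k"
  then show "\<sigma> \<subseteq> C \<and> cdeg W \<sigma> = k" by (cases "a \<sigma> = 0") auto
qed

lemma cochain_cdiff:
  assumes "finite C" "cochain W C k c"
  shows "cochain W C (k+1) (cdiff W Cb r c)"
  unfolding cochain_def
proof (intro allI impI)
  fix \<tau> assume "cdiff W Cb r c \<tau> \<noteq> 0"
  then have "(\<Sum>z\<in>Cb - \<tau>. if join W \<tau> = join W (insert z \<tau>) then csign r (insert z \<tau>) z * c (insert z \<tau>) else 0) \<noteq> 0"
    unfolding cdiff_def .
  from sum_nonzero_ex[OF this] obtain z where z: "z \<in> Cb - \<tau>" and t: "(if join W \<tau> = join W (insert z \<tau>) then csign r (insert z \<tau>) z * c (insert z \<tau>) else 0) \<noteq> 0"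
    by blast
  have J: "join W \<tau> = join W (insert z \<tau>)" and cz: "c (insert z \<tau>) \<noteq> 0" using t by (auto split: if_splits)
  have sub: "insert z \<tau> \<subseteq> C" and dg: "cdeg W (insert z \<tau>) = k"
    using assms(2)[unfolded cochain_def, rule_format, OF cz] by blast+
  have "finite \<tau>" using finite_subset[OF sub assms(1)] by simp
  then have "cdeg W (insert z \<tau>) = cdeg W \<tau> - 1" using cdeg_insert[of \<tau> z W] J z by simp
  then show "\<tau> \<subseteq> C \<and> cdeg W \<tau> = k + 1" using sub dg by simp
qed

lemma cochain_hh:
  assumes "finite C" "y \<in> C" "x \<noteq> y" "x \<subseteq> y" "cochain W C k c"
  shows "cochain W C (k - 1) (hh x y r c)"
  unfolding cochain_def
proof (intro allI impI)
  fix \<tau> assume h: "hh x y r c \<tau> \<noteq> 0"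
  have xy: "x \<in> \<tau>" "y \<in> \<tau>" and cz: "c (\<tau> - {y}) \<noteq> 0" using h by (auto simp: hh_def split: if_splits)
  have sub: "\<tau> - {y} \<subseteq> C" and dg: "cdeg W (\<tau> - {y}) = k"
    using assms(5)[unfolded cochain_def, rule_format, OF cz] by blast+
  have f: "finite (\<tau> - {y})" using finite_subset[OF sub assms(1)] .
  have xin: "x \<in> \<tau> - {y}" using xy assms(3) by simp
  have ti: "insert y (\<tau> - {y}) = \<tau>" using xy by auto
  have "cdeg W (insert y (\<tau> - {y})) = cdeg W (\<tau> - {y}) - 1"
    using cdeg_insert[OF f, of y W] join_absorb[OF xin assms(4), of W] by simp
  then show "\<tau> \<subseteq> C \<and> cdeg W \<tau> = k - 1" using sub dg ti assms(2) by auto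
qed

lemma hh_away:
  assumes "x \<noteq> y" "cochain W (C - {x}) k c"
  shows "hh x y r c = (\<lambda>_. 0)"
proof (rule ext)
  fix \<tau>
  show "hh x y r c \<tau> = 0"
  proof (rule ccontr)
    assume h: "hh x y r c \<tau> \<noteq> 0"
    have xy: "x \<in> \<tau>" "y \<in> \<tau>" and cz: "c (\<tau> - {y}) \<noteq> 0" using h by (auto simp: hh_def split: if_splits)
    have "\<tau> - {y} \<subseteq> C - {x}" using assms(2)[unfolded cochain_def, rule_format, OF cz] by blast
    then show False using xy assms(1) by blast
  qed
qed

lemma hh_zero: "hh x y r (\<lambda>_. 0) = (\<lambda>_. 0)"
  by (rule ext) (simp add: hh_def)

definition phi where
  "phi W Cb r x y c = (\<lambda>\<tau>. c \<tau> - cdiff W Cb r (hh x y r c) \<tau> - hh x y r (cdiff W Cb r c) \<tau>)"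

lemma phi_cochain:
  assumes fin: "finite Cb" and tot: "tot Cb r" and CC: "C \<subseteq> Cb" and xy: "x \<in> C" "y \<in> C" "x \<noteq> y" "x \<subseteq> y"
    and c: "cochain W C k c"
  shows "cochain W (C - {x}) k (phi W Cb r x y c)"
  unfolding cochain_def
proof (intro allI impI)
  fix \<tau> assume h: "phi W Cb r x y c \<tau> \<noteq> 0"
  have fC: "finite C" using finite_subset[OF CC fin] .
  have xt: "x \<notin> \<tau>"
  proof
    assume "x \<in> \<tau>"
    moreover have "x \<in> Cb" "y \<in> Cb" using xy CC by blast+
    ultimately have "cdiff W Cb r (hh x y r c) \<tau> + hh x y r (cdiff W Cb r c) \<tau> = c \<tau>"
      using key[OF fin tot _ _ xy(3,4) cochain_supp[OF c CC]] by blast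
    then show False using h by (simp add: phi_def)
  qed
  have c1: "cochain W C (k - 1 + 1) (cdiff W Cb r (hh x y r c))"
    by (rule cochain_cdiff[OF fC cochain_hh[OF fC xy(2,3,4) c]])
  have c2: "cochain W C (k + 1 - 1) (hh x y r (cdiff W Cb r c))"
    by (rule cochain_hh[OF fC xy(2,3,4) cochain_cdiff[OF fC c]])
  have "c \<tau> \<noteq> 0 \<or> cdiff W Cb r (hh x y r c) \<tau> \<noteq> 0 \<or> hh x y r (cdiff W Cb r c) \<tau> \<noteq> 0"
    using h by (auto simp: phi_def)
  moreover have "c \<tau> \<noteq> 0 \<Longrightarrow> \<tau> \<subseteq> C \<and> cdeg W \<tau> = k"
    using c[unfolded cochain_def, rule_format, of \<tau>] by simp
  moreover have "cdiff W Cb r (hh x y r c) \<tau> \<noteq> 0 \<Longrightarrow> \<tau> \<subseteq> C \<and> cdeg W \<tau> = k"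
    using c1[unfolded cochain_def, rule_format, of \<tau>] by simp
  moreover have "hh x y r (cdiff W Cb r c) \<tau> \<noteq> 0 \<Longrightarrow> \<tau> \<subseteq> C \<and> cdeg W \<tau> = k"
    using c2[unfolded cochain_def, rule_format, of \<tau>] by simp
  ultimately have "\<tau> \<subseteq> C \<and> cdeg W \<tau> = k" by blast
  then show "\<tau> \<subseteq> C - {x} \<and> cdeg W \<tau> = k" using xt by blast
qed

definition qi where
  "qi W Cb C' C r \<longleftrightarrow>
     (\<forall>k c. cochain W C' k c \<and> cdiff W Cb r c = (\<lambda>_. 0)
            \<and> (\<exists>b. cochain W C (k - 1) b \<and> cdiff W Cb r b = c)
          \<longrightarrow> (\<exists>b. cochain W C' (k - 1) b \<and> cdiff W Cb r b = c))
   \<and> (\<forall>k c. cochain W C k c \<and> cdiff W Cb r c = (\<lambda>_. 0)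
          \<longrightarrow> (\<exists>c' b. cochain W C' k c' \<and> cdiff W Cb r c' = (\<lambda>_. 0)
                  \<and> cochain W C (k - 1) b \<and> c = (\<lambda>\<sigma>. c' \<sigma> + cdiff W Cb r b \<sigma>)))"

lemma qiD1:
  assumes "qi W Cb C' C r" "cochain W C' k c" "cdiff W Cb r c = (\<lambda>_. 0)" "cochain W C (k - 1) b" "cdiff W Cb r b = c"
  shows "\<exists>b. cochain W C' (k - 1) b \<and> cdiff W Cb r b = c"
proof -
  have "cochain W C' k c \<and> cdiff W Cb r c = (\<lambda>_. 0) \<and> (\<exists>b. cochain W C (k - 1) b \<and> cdiff W Cb r b = c)"
    using assms(2-5) by blast
  then show ?thesis using conjunct1[OF assms(1)[unfolded qi_def], rule_format, of k c] by blast
qed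

lemma qiD2:
  assumes "qi W Cb C' C r" "cochain W C k c" "cdiff W Cb r c = (\<lambda>_. 0)"
  shows "\<exists>c' b. cochain W C' k c' \<and> cdiff W Cb r c' = (\<lambda>_. 0)
                  \<and> cochain W C (k - 1) b \<and> c = (\<lambda>\<sigma>. c' \<sigma> + cdiff W Cb r b \<sigma>)"
  using conjunct2[OF assms(1)[unfolded qi_def], rule_format, of k c] assms(2,3) by blast

lemma qi_step:
  assumes fin: "finite Cb" and tot: "tot Cb r" and CC: "C \<subseteq> Cb" and xy: "x \<in> C" "y \<in> C" "x \<noteq> y" "x \<subseteq> y"
  shows "qi W Cb (C - {x}) C r"
  unfolding qi_def
proof (intro conjI allI impI)
  fix k c
  assume a: "cochain W (C - {x}) k c \<and> cdiff W Cb r c = (\<lambda>_. 0) \<and> (\<exists>b. cochain W C (k - 1) b \<and> cdiff W Cb r b = c)"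
  then obtain b where b: "cochain W C (k - 1) b" "cdiff W Cb r b = c" by blast
  have hc: "hh x y r c = (\<lambda>_. 0)" using hh_away[OF xy(3)] a by blast
  have yCb: "y \<in> Cb" using xy CC by blast
  have hb: "\<And>\<sigma>. hh x y r b \<sigma> \<noteq> 0 \<Longrightarrow> \<sigma> \<subseteq> Cb"
    by (rule hh_supp[OF yCb cochain_supp[OF b(1) CC]])
  have dd: "cdiff W Cb r (cdiff W Cb r (hh x y r b)) = (\<lambda>_. 0)"
    by (rule cdiff_cdiff[OF fin tot hb])
  have "cdiff W Cb r (phi W Cb r x y b) = c"
    unfolding phi_def cdiff_diff b(2) hc dd cdiff_zero by simp
  moreover have "cochain W (C - {x}) (k - 1) (phi W Cb r x y b)"
    by (rule phi_cochain[OF fin tot CC xy b(1)])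
  ultimately show "\<exists>b. cochain W (C - {x}) (k - 1) b \<and> cdiff W Cb r b = c" by blast
next
  fix k c
  assume a: "cochain W C k c \<and> cdiff W Cb r c = (\<lambda>_. 0)"
  have fC: "finite C" using finite_subset[OF CC fin] .
  have yCb: "y \<in> Cb" using xy CC by blast
  have hb: "\<And>\<sigma>. hh x y r c \<sigma> \<noteq> 0 \<Longrightarrow> \<sigma> \<subseteq> Cb"
    by (rule hh_supp[OF yCb cochain_supp[OF conjunct1[OF a] CC]])
  have dd: "cdiff W Cb r (cdiff W Cb r (hh x y r c)) = (\<lambda>_. 0)"
    by (rule cdiff_cdiff[OF fin tot hb])
  have 1: "cochain W (C - {x}) k (phi W Cb r x y c)"
    using phi_cochain[OF fin tot CC xy] a by blast
  have 2: "cdiff W Cb r (phi W Cb r x y c) = (\<lambda>_. 0)"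
    unfolding phi_def cdiff_diff using a dd by (simp add: hh_zero cdiff_zero)
  have 3: "cochain W C (k - 1) (hh x y r c)"
    using cochain_hh[OF fC xy(2,3,4)] a by blast
  have 4: "c = (\<lambda>\<sigma>. phi W Cb r x y c \<sigma> + cdiff W Cb r (hh x y r c) \<sigma>)"
    using a by (simp add: phi_def hh_zero)
  show "\<exists>c' b. cochain W (C - {x}) k c' \<and> cdiff W Cb r c' = (\<lambda>_. 0)
                  \<and> cochain W C (k - 1) b \<and> c = (\<lambda>\<sigma>. c' \<sigma> + cdiff W Cb r b \<sigma>)"
    using 1 2 3 4 by blast
qed

lemma qi_refl: "qi W Cb C C r"
  unfolding qi_def
  apply (intro conjI allI impI)
  subgoal by (elim conjE) assumption
  subgoal for k c by (rule exI[of _ c], rule exI[of _ "\<lambda>_. 0"]) (auto simp: cdiff_zero cochain_def)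
  done

lemma qi_trans:
  assumes "C1 \<subseteq> C2" "C2 \<subseteq> C3" "qi W Cb C1 C2 r" "qi W Cb C2 C3 r"
  shows "qi W Cb C1 C3 r"
  unfolding qi_def
proof (intro conjI allI impI)
  fix k c
  assume a: "cochain W C1 k c \<and> cdiff W Cb r c = (\<lambda>_. 0) \<and> (\<exists>b. cochain W C3 (k - 1) b \<and> cdiff W Cb r b = c)"
  then obtain b where b: "cochain W C3 (k - 1) b" "cdiff W Cb r b = c" by blast
  have c1: "cochain W C1 k c" and dc: "cdiff W Cb r c = (\<lambda>_. 0)" using a by blast+
  have "cochain W C2 k c" using cochain_mono[OF assms(1) c1] .
  then obtain b2 where b2: "cochain W C2 (k - 1) b2" "cdiff W Cb r b2 = c"
    using qiD1[OF assms(4) _ dc b] by blast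
  show "\<exists>b. cochain W C1 (k - 1) b \<and> cdiff W Cb r b = c"
    by (rule qiD1[OF assms(3) c1 dc b2])
next
  fix k c
  assume a: "cochain W C3 k c \<and> cdiff W Cb r c = (\<lambda>_. 0)"
  then obtain c2 b3 where c2: "cochain W C2 k c2" "cdiff W Cb r c2 = (\<lambda>_. 0)" "cochain W C3 (k - 1) b3"
     "c = (\<lambda>\<sigma>. c2 \<sigma> + cdiff W Cb r b3 \<sigma>)"
    using qiD2[OF assms(4)] by blast
  then obtain c1 b2 where c1: "cochain W C1 k c1" "cdiff W Cb r c1 = (\<lambda>_. 0)" "cochain W C2 (k - 1) b2"
     "c2 = (\<lambda>\<sigma>. c1 \<sigma> + cdiff W Cb r b2 \<sigma>)"
    using qiD2[OF assms(3) c2(1,2)] by blast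
  have "cochain W C3 (k - 1) (\<lambda>\<sigma>. b2 \<sigma> + b3 \<sigma>)"
    using cochain_add[OF cochain_mono[OF assms(2) c1(3)] c2(3)] .
  moreover have "c = (\<lambda>\<sigma>. c1 \<sigma> + cdiff W Cb r (\<lambda>\<sigma>. b2 \<sigma> + b3 \<sigma>) \<sigma>)"
    unfolding cdiff_add c2(4) c1(4) by (simp add: add.assoc)
  ultimately show "\<exists>c' b. cochain W C1 k c' \<and> cdiff W Cb r c' = (\<lambda>_. 0)
                  \<and> cochain W C3 (k - 1) b \<and> c = (\<lambda>\<sigma>. c' \<sigma> + cdiff W Cb r b \<sigma>)"
    using c1(1,2) by blast
qed

lemma qi_main:
  assumes "finite Cb" "tot Cb r"
  shows "C \<subseteq> Cb \<Longrightarrow> C' \<subseteq> C \<Longrightarrow>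
    \<forall>x\<in>C - C'. \<exists>y\<in>C'. x \<subseteq> y \<and> x \<noteq> y \<Longrightarrow> card (C - C') = n \<Longrightarrow> qi W Cb C' C r"
proof (induction n arbitrary: C)
  case 0
  have "C - C' \<subseteq> Cb" using 0 by blast
  then have "finite (C - C')" using finite_subset assms(1) by auto
  then have "C - C' = {}" using 0(4) by simp
  then have "C = C'" using 0(2) by blast
  then show ?case by (simp add: qi_refl)
next
  case (Suc n)
  have "C - C' \<noteq> {}" using Suc.prems(4) by (metis card.empty Zero_neq_Suc)
  then obtain x where x: "x \<in> C - C'" by blast
  then obtain y where y: "y \<in> C'" "x \<subseteq> y" "x \<noteq> y" using Suc.prems(3) by blast
  have xC: "x \<in> C" and yC: "y \<in> C" using x y(1) Suc.prems(2) by auto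
  have s1: "qi W Cb (C - {x}) C r"
    by (rule qi_step[OF assms(1,2) Suc.prems(1) xC yC y(3) y(2)])
  have e: "C - {x} - C' = (C - C') - {x}" by auto
  have "card (C - {x} - C') = n" unfolding e using card_Diff_singleton[OF x] Suc.prems(4) by simp
  moreover have "C - {x} \<subseteq> Cb" using Suc.prems(1) by blast
  moreover have "C' \<subseteq> C - {x}" using Suc.prems(2) x by blast
  moreover have "\<forall>z\<in>C - {x} - C'. \<exists>y\<in>C'. z \<subseteq> y \<and> z \<noteq> y" using Suc.prems(3) by blast
  ultimately have s2: "qi W Cb C' (C - {x}) r"
    using Suc.IH[of "C - {x}"] by blast
  have "C' \<subseteq> C - {x}" "C - {x} \<subseteq> C" using Suc.prems(2) x by blast+
  then show ?case using qi_trans[OF _ _ s2 s1] by blast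
qed


theorem corollary2p2:
  fixes A :: "(complex ^ ('n::finite)) set set" and x0 :: "(complex ^ ('n::finite)) set"
    and r :: "((complex ^ ('n::finite)) set \<times> (complex ^ ('n::finite)) set) set"
  assumes "subspace_arrangement A"
    and "x0 \<in> A"
    and "linear_order_on ((\<lambda>y. x0 \<inter> y) ` (A - {x0})) r"
  shows "incl_quasi_iso x0
           {z \<in> (\<lambda>y. x0 \<inter> y) ` (A - {x0}). \<not> (\<exists>w \<in> (\<lambda>y. x0 \<inter> y) ` (A - {x0}). z \<subset> w)}
           ((\<lambda>y. x0 \<inter> y) ` (A - {x0})) r"
proof -
  define C where "C = (\<lambda>y. x0 \<inter> y) ` (A - {x0})"
  define C' where "C' = {z \<in> C. \<not> (\<exists>w \<in> C. z \<subset> w)}"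
  have fin: "finite C" using assms(1) unfolding subspace_arrangement_def C_def by simp
  have tot: "tot C r"
    unfolding tot_def
  proof (intro ballI impI)
    fix a b assume ab: "a \<in> C" "b \<in> C" "a \<noteq> b"
    have lo: "total_on C r" "antisym r" using assms(3) unfolding C_def linear_order_on_def partial_order_on_def by blast+
    have "(a,b) \<in> r \<or> (b,a) \<in> r" using lo(1) ab unfolding total_on_def by blast
    moreover have "\<not> ((a,b) \<in> r \<and> (b,a) \<in> r)" using lo(2) ab(3) unfolding antisym_def by blast
    ultimately show "(a,b) \<in> r \<longleftrightarrow> (b,a) \<notin> r" by blast
  qed
  have sub: "C' \<subseteq> C" unfolding C'_def by blast
  have mx: "\<forall>x\<in>C - C'. \<exists>y\<in>C'. x \<subseteq> y \<and> x \<noteq> y"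
  proof
    fix x assume x: "x \<in> C - C'"
    obtain m where m: "m \<in> C" "x \<subseteq> m" "\<forall>b\<in>C. m \<subseteq> b \<longrightarrow> m = b"
      using finite_has_maximal2[OF fin, of x] x by blast
    have "m \<in> C'" unfolding C'_def using m by blast
    moreover have "x \<noteq> m" using x \<open>m \<in> C'\<close> by blast
    ultimately show "\<exists>y\<in>C'. x \<subseteq> y \<and> x \<noteq> y" using m(2) by blast
  qed
  have "qi x0 C C' C r" by (rule qi_main[OF fin tot order.refl sub mx refl])
  then show ?thesis unfolding C_def C'_def qi_def incl_quasi_iso_def .
qed

end
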